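(* Let $r\ge2$, $N\ge r-1$, $d\ge1$ be integers. For any function $f\colon\Delta_N\to\mathbb{R}^d$, we have $\delta(\mathrm{Conf}_r^{\Delta}(f))\le\sqrt{r}\cdot\delta(f)$.
   Context: $\Delta_N$ is the geometric $N$-simplex. $\mathrm{Conf}_r^{\Delta}(\Delta_N)=\{(x_1,\dots,x_r)\in(\Delta_N)^{\times r}: \text{the } x_i \text{ lie in pairwise disjoint faces}\}$ with the subspace topology. $W_r^{\oplus d}=\{(z_1,\dots,z_r)\in(\mathbb{R}^d)^{\oplus r}: z_1+\dots+z_r=0\}$ with the Euclidean norm. $\mathrm{Conf}_r^{\Delta}(f)\colon\mathrm{Conf}_r^{\Delta}(\Delta_N)\to W_r^{\oplus d}$ is $(x_1,\dots,x_r)\mapsto\big(f(x_i)-\tfrac1r\sum_{j=1}^rf(x_j)\big)_{i=1}^r$. For a topological space $X$ and a metric space $Y$, $\delta(h)=\inf\{\delta\ge 0 : \text{for every } x\in X \text{ there is an open neighborhood } U_x \text{ of } x \text{ with } \operatorname{diam}(h(U_x))\le\delta\}$. *)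

theory Defs
  imports "HOL-Analysis.Analysis"
begin

text \<open>The type nat => real carries the product topology, which on this set is
  the Euclidean topology of R^(N+1).\<close>
definition geom_simplex :: "nat \<Rightarrow> (nat \<Rightarrow> real) set" where
  "geom_simplex N = {x. (\<forall>i. 0 \<le> x i) \<and> (\<forall>i. N < i \<longrightarrow> x i = 0) \<and> (\<Sum>i\<le>N. x i) = 1}"

definition simplex_face :: "nat \<Rightarrow> nat set \<Rightarrow> (nat \<Rightarrow> real) set" where
  "simplex_face N \<sigma> = {x \<in> geom_simplex N. \<forall>i. i \<notin> \<sigma> \<longrightarrow> x i = 0}"

definition simplex_faces :: "nat \<Rightarrow> (nat \<Rightarrow> real) set set" where
  "simplex_faces N = {simplex_face N \<sigma> | \<sigma>. \<sigma> \<noteq> {} \<and> \<sigma> \<subseteq> {..N}}"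

definition conf :: "nat \<Rightarrow> nat \<Rightarrow> (nat \<Rightarrow> (nat \<Rightarrow> real)) set" where
  "conf r N = {x \<in> {..<r} \<rightarrow>\<^sub>E geom_simplex N.
     \<exists>F. (\<forall>i<r. F i \<in> simplex_faces N \<and> x i \<in> F i) \<and>
         (\<forall>i<r. \<forall>j<r. i \<noteq> j \<longrightarrow> F i \<inter> F j = {})}"

definition conf_top :: "nat \<Rightarrow> nat \<Rightarrow> (nat \<Rightarrow> (nat \<Rightarrow> real)) topology" where
  "conf_top r N = subtopology (product_topology (\<lambda>_. euclidean) {..<r}) (conf r N)"

definition conf_map :: "nat \<Rightarrow> ((nat \<Rightarrow> real) \<Rightarrow> 'a::euclidean_space)
    \<Rightarrow> (nat \<Rightarrow> (nat \<Rightarrow> real)) \<Rightarrow> (nat \<Rightarrow> 'a)" where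
  "conf_map r f x = (\<lambda>i. if i < r then f (x i) - (1 / real r) *\<^sub>R (\<Sum>j<r. f (x j)) else 0)"

definition dist_W :: "nat \<Rightarrow> (nat \<Rightarrow> 'a::euclidean_space) \<Rightarrow> (nat \<Rightarrow> 'a) \<Rightarrow> real" where
  "dist_W r z w = sqrt (\<Sum>i<r. (norm (z i - w i))\<^sup>2)"

definition ediam :: "('b \<Rightarrow> 'b \<Rightarrow> real) \<Rightarrow> 'b set \<Rightarrow> ereal" where
  "ediam dY S = (if S = {} then 0 else (SUP p\<in>S \<times> S. ereal (dY (fst p) (snd p))))"

definition delta :: "'a topology \<Rightarrow> ('b \<Rightarrow> 'b \<Rightarrow> real) \<Rightarrow> ('a \<Rightarrow> 'b) \<Rightarrow> ereal" where
  "delta X dY h = Inf {\<delta>. 0 \<le> \<delta> \<and>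
     (\<forall>x\<in>topspace X. \<exists>U. openin X U \<and> x \<in> U \<and> ediam dY (h ` U) \<le> \<delta>)}"

end

theory Submission
  imports Defs
begin
lemma var_le:
  fixes a :: "nat \<Rightarrow> 'a::real_inner"
  shows "(\<Sum>i<r. (norm (a i - (1/real r) *\<^sub>R (\<Sum>j<r. a j)))\<^sup>2) \<le> (\<Sum>i<r. (norm (a i))\<^sup>2)"
proof (cases "r = 0")
  case True then show ?thesis by simp
next
  case False
  define m where "m = (1/real r) *\<^sub>R (\<Sum>j<r. a j)"
  have s: "(\<Sum>j<r. a j) = real r *\<^sub>R m" using False by (simp add: m_def)
  have "(\<Sum>i<r. (norm (a i - m))\<^sup>2) = (\<Sum>i<r. (norm (a i))\<^sup>2 - 2 * inner (a i) m + (norm m)\<^sup>2)"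
    by (intro sum.cong refl) (simp add: power2_norm_eq_inner inner_diff_left inner_diff_right inner_commute)
  also have "\<dots> = (\<Sum>i<r. (norm (a i))\<^sup>2) - 2 * inner (\<Sum>j<r. a j) m + real r * (norm m)\<^sup>2"
    by (simp add: sum.distrib sum_subtractf inner_sum_left sum_distrib_left)
  also have "\<dots> = (\<Sum>i<r. (norm (a i))\<^sup>2) - real r * (norm m)\<^sup>2"
    by (simp add: s power2_norm_eq_inner)
  also have "\<dots> \<le> (\<Sum>i<r. (norm (a i))\<^sup>2)" by simp
  finally show ?thesis by (simp add: m_def)
qed

lemma ediam_le:
  assumes "\<And>p q. p \<in> S \<Longrightarrow> q \<in> S \<Longrightarrow> dY p q \<le> e" "0 \<le> e"
  shows "ediam dY S \<le> ereal e"
  using assms unfolding ediam_def by (auto intro!: SUP_least)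

lemma ediam_D:
  assumes "ediam dY S \<le> ereal e" "p \<in> S" "q \<in> S"
  shows "dY p q \<le> e"
proof -
  have "ereal (dY p q) \<le> ediam dY S" using assms(2,3) unfolding ediam_def
    by (auto intro!: SUP_upper2[of "(p,q)"])
  then show ?thesis using assms(1) by (metis ereal_less_eq(3) order_trans)
qed

lemma conf_map_diff:
  "i < r \<Longrightarrow> conf_map r f z i - conf_map r f w i =
     (f (z i) - f (w i)) - (1/real r) *\<^sub>R (\<Sum>j<r. f (z j) - f (w j))"
  by (simp add: conf_map_def sum_subtractf scaleR_diff_right algebra_simps)

theorem lemma4p11:
  fixes r N :: nat and f :: "(nat \<Rightarrow> real) \<Rightarrow> 'a::euclidean_space"
  assumes "2 \<le> r" and "r - 1 \<le> N"
  shows "delta (conf_top r N) (dist_W r) (conf_map r f)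
           \<le> ereal (sqrt (real r)) * delta (subtopology euclidean (geom_simplex N)) dist f"
proof -
  define S where "S = {\<delta>. 0 \<le> \<delta> \<and>
     (\<forall>x\<in>topspace (subtopology euclidean (geom_simplex N)). \<exists>U. openin (subtopology euclidean (geom_simplex N)) U \<and> x \<in> U \<and> ediam dist (f ` U) \<le> \<delta>)}"
  define T where "T = {\<delta>. 0 \<le> \<delta> \<and>
     (\<forall>x\<in>topspace (conf_top r N). \<exists>U. openin (conf_top r N) U \<and> x \<in> U \<and> ediam (dist_W r) (conf_map r f ` U) \<le> \<delta>)}"
  have rpos: "sqrt (real r) > 0" using assms by simp
  have key: "ereal (sqrt (real r)) * \<delta> \<in> T" if "\<delta> \<in> S" for \<delta>
  proof (cases \<delta>)
    case PInf
    then have "ereal (sqrt (real r)) * \<delta> = \<infinity>" using rpos by simp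
    then show ?thesis unfolding T_def by (auto intro!: exI[of _ "topspace (conf_top r N)"])
  next
    case MInf
    then show ?thesis using that by (simp add: S_def)
  next
    case (real e)
    have e0: "0 \<le> e" using that real by (simp add: S_def)
    have hS: "\<forall>y\<in>geom_simplex N. \<exists>U. openin (subtopology euclidean (geom_simplex N)) U \<and> y \<in> U \<and> ediam dist (f ` U) \<le> ereal e"
      using that real by (simp add: S_def)
    show ?thesis unfolding T_def
    proof (intro CollectI conjI ballI)
      show "0 \<le> ereal (sqrt (real r)) * \<delta>" using real e0 rpos by simp
      fix x assume "x \<in> topspace (conf_top r N)"
      then have xc: "x \<in> conf r N" by (simp add: conf_top_def)
      then have xs: "\<And>i. i < r \<Longrightarrow> x i \<in> geom_simplex N" by (auto simp: conf_def PiE_iff)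
      have "\<forall>i<r. \<exists>V. open V \<and> x i \<in> V \<and> (\<forall>y\<in>geom_simplex N \<inter> V. \<forall>y'\<in>geom_simplex N \<inter> V. dist (f y) (f y') \<le> e)"
      proof (intro allI impI)
        fix i assume "i < r"
        then obtain U where U: "openin (subtopology euclidean (geom_simplex N)) U" "x i \<in> U" "ediam dist (f ` U) \<le> ereal e"
          using hS xs by blast
        then obtain V where V: "open V" "U = geom_simplex N \<inter> V" by (auto simp: openin_open)
        show "\<exists>V. open V \<and> x i \<in> V \<and> (\<forall>y\<in>geom_simplex N \<inter> V. \<forall>y'\<in>geom_simplex N \<inter> V. dist (f y) (f y') \<le> e)"
          using U V by (intro exI[of _ V]) (auto intro: ediam_D)
      qed
      then obtain V where V: "\<And>i. i < r \<Longrightarrow> open (V i) \<and> x i \<in> V i \<and> (\<forall>y\<in>geom_simplex N \<inter> V i. \<forall>y'\<in>geom_simplex N \<inter> V i. dist (f y) (f y') \<le> e)"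
        by metis
      define U where "U = PiE {..<r} V \<inter> conf r N"
      show "\<exists>U. openin (conf_top r N) U \<and> x \<in> U \<and> ediam (dist_W r) (conf_map r f ` U) \<le> ereal (sqrt (real r)) * \<delta>"
      proof (intro exI conjI)
        have "openin (product_topology (\<lambda>_. euclidean) {..<r}) (PiE {..<r} V)"
          using V by (simp add: openin_PiE_gen)
        then show "openin (conf_top r N) U"
          unfolding conf_top_def U_def by (auto simp: openin_subtopology)
        show "x \<in> U" using xc V unfolding U_def by (auto simp: conf_def PiE_iff)
        show "ediam (dist_W r) (conf_map r f ` U) \<le> ereal (sqrt (real r)) * \<delta>"
          unfolding real times_ereal.simps
        proof (rule ediam_le)
          show "0 \<le> sqrt (real r) * e" using e0 by simp
          fix p q assume "p \<in> conf_map r f ` U" "q \<in> conf_map r f ` U"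
          then obtain z w where p: "p = conf_map r f z" and q: "q = conf_map r f w" and zU: "z \<in> U" and wU: "w \<in> U" by auto
          define a where "a = (\<lambda>i. f (z i) - f (w i))"
          have na: "norm (a i) \<le> e" if "i < r" for i
          proof -
            have "z i \<in> geom_simplex N \<inter> V i" "w i \<in> geom_simplex N \<inter> V i"
              using zU wU that unfolding U_def by (auto simp: conf_def PiE_iff)
            then show ?thesis using V[OF that] by (simp add: a_def dist_norm)
          qed
          have "dist_W r p q = sqrt (\<Sum>i<r. (norm (a i - (1/real r) *\<^sub>R (\<Sum>j<r. a j)))\<^sup>2)"
            unfolding dist_W_def p q a_def by (simp add: conf_map_diff)
          also have "\<dots> \<le> sqrt (\<Sum>i<r. (norm (a i))\<^sup>2)"
            by (rule real_sqrt_le_mono, rule var_le)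
          also have "\<dots> \<le> sqrt (\<Sum>i<r. e\<^sup>2)"
            by (intro real_sqrt_le_mono sum_mono power_mono na) auto
          also have "\<dots> = sqrt (real r) * e" using e0 by (simp add: real_sqrt_mult)
          finally show "dist_W r p q \<le> sqrt (real r) * e" .
        qed
      qed
    qed
  qed
  have "delta (conf_top r N) (dist_W r) (conf_map r f) = Inf T" by (simp add: delta_def T_def)
  also have "\<dots> \<le> Inf {ereal (sqrt (real r)) * \<delta> |\<delta>. \<delta> \<in> S}"
    by (rule Inf_superset_mono) (use key in blast)
  also have "\<dots> = ereal (sqrt (real r)) * Inf {\<delta>. \<delta> \<in> S}"
    by (rule ereal_Inf_cmult) (use rpos in simp)
  also have "\<dots> = ereal (sqrt (real r)) * delta (subtopology euclidean (geom_simplex N)) dist f"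
    by (simp add: delta_def S_def)
  finally show ?thesis .
qed
end
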